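(* There exists a directed set $\mathcal A$, which is not a cardinal number, with $\operatorname{card}(\mathcal A)=\operatorname{cov}(\mathcal N)$, such that $\mathcal{ND}_{\mathcal A}$ is strongly $\mathfrak c$-algebrable in $\left(\mathbb R^{[0,1]}\right)^{\mathcal A}$.
   Context: A directed set is a nonempty set $\mathcal A$ with a reflexive transitive relation $\le$ in which any two elements have an upper bound; $x_A\to x$ if for each neighbourhood $U$ of $x$ there is $A_0$ with $x_A\in U$ for $A\ge A_0$. $\left(\mathbb R^{[0,1]}\right)^{\mathcal A}$ is the commutative real algebra of nets of functions $[0,1]\to\mathbb R$ with indexwise operations. $\lambda$ is Lebesgue measure, $\mathcal N$ the null subsets of $[0,1]$, $\operatorname{cov}(\mathcal N)$ the least size of a subfamily of $\mathcal N$ covering $[0,1]$. $\mathcal{ND}_{\mathcal A}$: nets of Lebesgue measurable $f_A:[0,1]\to\mathbb R$ such that there is an integrable $g$ with $|f_A|\le g$ a.e. for all $A$, $f_A\to f$ a.e. for some integrable $f$, and $\int|f_A-f|\,d\lambda$ does not converge to $0$. A subset $S$ of a commutative algebra is strongly $\kappa$-algebrable if there is a set $X$ of $\kappa$ algebraically independent elements such that every nonzero element of the (non-unital) algebra generated by $X$ belongs to $S$. *)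

theory Defs
  imports "HOL-Analysis.Analysis" "HOL-Library.Equipollence"
begin

definition directed_set :: "'a set \<Rightarrow> ('a \<Rightarrow> 'a \<Rightarrow> bool) \<Rightarrow> bool" where
  "directed_set A le \<longleftrightarrow> A \<noteq> {} \<and> (\<forall>a\<in>A. le a a)
     \<and> (\<forall>a\<in>A. \<forall>b\<in>A. \<forall>c\<in>A. le a b \<longrightarrow> le b c \<longrightarrow> le a c)
     \<and> (\<forall>a\<in>A. \<forall>b\<in>A. \<exists>c\<in>A. le a c \<and> le b c)"

definition dir_rel :: "'a set \<Rightarrow> ('a \<Rightarrow> 'a \<Rightarrow> bool) \<Rightarrow> 'a rel" where
  "dir_rel A le = {(a, b). a \<in> A \<and> b \<in> A \<and> le a b}"

definition net_tendsto :: "'a set \<Rightarrow> ('a \<Rightarrow> 'a \<Rightarrow> bool) \<Rightarrow> ('a \<Rightarrow> real) \<Rightarrow> real \<Rightarrow> bool" where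
  "net_tendsto A le x l \<longleftrightarrow>
     (\<forall>e>0. \<exists>a0\<in>A. \<forall>a\<in>A. le a0 a \<longrightarrow> \<bar>x a - l\<bar> < e)"

definition null_cover :: "real set set \<Rightarrow> bool" where
  "null_cover F \<longleftrightarrow> (\<forall>N\<in>F. N \<subseteq> {0..1} \<and> N \<in> null_sets lebesgue) \<and> {0..1} \<subseteq> \<Union>F"

text \<open>card S = cov(N): S is equipotent to some null cover, and injects into every null cover.\<close>
definition card_eq_covN :: "'a set \<Rightarrow> bool" where
  "card_eq_covN S \<longleftrightarrow> (\<exists>F. null_cover F \<and> S \<approx> F) \<and> (\<forall>F. null_cover F \<longrightarrow> S \<lesssim> F)"

text \<open>The class ND_A. A net is a function f with f a t the value of f_a at t.\<close>
definition ND :: "'a set \<Rightarrow> ('a \<Rightarrow> 'a \<Rightarrow> bool) \<Rightarrow> ('a \<Rightarrow> real \<Rightarrow> real) set" where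
  "ND A le = {f. (\<forall>a\<in>A. f a \<in> borel_measurable (lebesgue_on {0..1}))
     \<and> (\<exists>g. integrable (lebesgue_on {0..1}) g
            \<and> (\<forall>a\<in>A. AE t in lebesgue_on {0..1}. \<bar>f a t\<bar> \<le> g t))
     \<and> (\<exists>h. integrable (lebesgue_on {0..1}) h
            \<and> (AE t in lebesgue_on {0..1}. net_tendsto A le (\<lambda>a. f a t) (h t))
            \<and> \<not> net_tendsto A le
                 (\<lambda>a. integral\<^sup>L (lebesgue_on {0..1}) (\<lambda>t. \<bar>f a t - h t\<bar>)) 0)}"

text \<open>The ambient algebra (R^[0,1])^A, realised as functions vanishing outside A \<times> [0,1].\<close>
definition net_algebra :: "'a set \<Rightarrow> ('a \<Rightarrow> real \<Rightarrow> real) set" where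
  "net_algebra A = {x. \<forall>a t. (a \<notin> A \<or> t \<notin> {0..1}) \<longrightarrow> x a t = 0}"

text \<open>Polynomials in n variables without constant term, given by a finitely supported
  coefficient function on exponent vectors.\<close>
definition poly_nc :: "nat \<Rightarrow> ((nat \<Rightarrow> nat) \<Rightarrow> real) \<Rightarrow> bool" where
  "poly_nc n c \<longleftrightarrow> finite {e. c e \<noteq> 0}
     \<and> (\<forall>e. c e \<noteq> 0 \<longrightarrow> (\<forall>i\<ge>n. e i = 0) \<and> e \<noteq> (\<lambda>_. 0))"

definition poly_eval :: "nat \<Rightarrow> ((nat \<Rightarrow> nat) \<Rightarrow> real) \<Rightarrow> (nat \<Rightarrow> 'a \<Rightarrow> real \<Rightarrow> real) \<Rightarrow> 'a \<Rightarrow> real \<Rightarrow> real" where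
  "poly_eval n c x = (\<lambda>a t. \<Sum>e\<in>{e. c e \<noteq> 0}. c e * (\<Prod>i<n. (x i a t) ^ e i))"

text \<open>Strong kappa-algebrability of S in the algebra Alg (kappa given as a set K of that
  cardinality): there is X \<subseteq> Alg with X \<approx> K such that for distinct x_1..x_n in X and every
  nonzero polynomial P without constant term, P(x_1..x_n) is a nonzero element of S.
  (This expresses both algebraic independence of X and that every nonzero element of the
  generated algebra lies in S.)\<close>
definition strongly_algebrable :: "('a \<Rightarrow> real \<Rightarrow> real) set \<Rightarrow> ('a \<Rightarrow> real \<Rightarrow> real) set \<Rightarrow> 'k set \<Rightarrow> bool" where
  "strongly_algebrable Alg S K \<longleftrightarrow> (\<exists>X. X \<subseteq> Alg \<and> X \<approx> K \<and>
     (\<forall>n x c. x ` {..<n} \<subseteq> X \<and> inj_on x {..<n} \<and> poly_nc n c \<and> c \<noteq> (\<lambda>_. 0) \<longrightarrow>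
        poly_eval n c x \<in> S \<and> poly_eval n c x \<noteq> (\<lambda>_ _. 0)))"

end

theory Submission
  imports Defs "HOL-Algebra.Free_Abelian_Groups"
begin

lemma singleton_cover: "null_cover ((\<lambda>x. {x}) ` {0..(1::real)})"
  unfolding null_cover_def by auto

lemma min_cover: "\<exists>F. null_cover F \<and> (\<forall>G. null_cover G \<longrightarrow> F \<lesssim> G)"
proof -
  let ?R = "card_of ` {F. null_cover F}"
  have "?R \<noteq> {}" using singleton_cover by blast
  moreover have "\<forall>r\<in>?R. Card_order r" using card_of_Card_order by blast
  ultimately obtain r where "r \<in> ?R" "\<forall>r'\<in>?R. r \<le>o r'"
    using exists_minim_Card_order[of ?R] by blast
  then obtain F where "null_cover F" "\<forall>G. null_cover G \<longrightarrow> |F| \<le>o |G|" by blast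
  then show ?thesis unfolding lepoll_def by (metis card_of_ordLeq)
qed

lemma null_cover_infinite:
  assumes "null_cover F" shows "infinite F"
proof
  assume "finite F"
  moreover have "F \<subseteq> null_sets lebesgue" using assms unfolding null_cover_def by blast
  ultimately have "\<Union>F \<in> null_sets lebesgue" by (rule null_sets.finite_Union)
  then have "{0..1::real} \<in> null_sets lebesgue"
  proof (rule null_sets_subset[of "\<Union>F"])
    show "{0..1::real} \<in> sets lebesgue" by simp
    show "{0..1::real} \<subseteq> \<Union>F" using assms unfolding null_cover_def by (elim conjE)
  qed
  then have "emeasure lebesgue {0..1::real} = 0" by (simp add: null_sets_def)
  moreover have "emeasure lebesgue {0..1::real} = 1"
    by (subst emeasure_completion) (simp_all add: emeasure_lborel_Icc_eq)
  ultimately show False by simp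
qed


lemma construct_A: "\<exists>(A::real set) (\<Phi>::real \<Rightarrow> real set).
   (\<forall>a\<in>A. \<Phi> a \<subseteq> {0..1} \<and> \<Phi> a \<in> null_sets lebesgue)
 \<and> (\<forall>t\<in>{0..1}. \<exists>a\<in>A. t \<in> \<Phi> a)
 \<and> (\<forall>a\<in>A. \<forall>b\<in>A. \<exists>c\<in>A. \<Phi> a \<union> \<Phi> b \<subseteq> \<Phi> c)
 \<and> (\<exists>a1\<in>A. \<exists>a2\<in>A. a1 \<noteq> a2 \<and> \<Phi> a1 = \<Phi> a2)
 \<and> card_eq_covN A"
proof -
  from min_cover obtain Fm where Fm: "null_cover Fm" "\<forall>G. null_cover G \<longrightarrow> Fm \<lesssim> G"
    by (elim exE conjE)
  have infF: "infinite Fm" by (rule null_cover_infinite[OF Fm(1)])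
  define U where "U = Union ` Fpow Fm"
  have U_null: "u \<subseteq> {0..1} \<and> u \<in> null_sets lebesgue" if uU: "u \<in> U" for u
  proof -
    obtain G where G0: "G \<in> Fpow Fm" "u = \<Union>G" by (rule imageE[OF uU[unfolded U_def]])
    then have G: "G \<subseteq> Fm" "finite G" "u = \<Union>G" by (simp_all add: Fpow_def)
    have GN: "\<forall>N\<in>G. N \<subseteq> {0..1} \<and> N \<in> null_sets lebesgue" using G(1) Fm(1) unfolding null_cover_def by blast
    have "\<Union>G \<in> null_sets lebesgue" by (rule null_sets.finite_Union) (use G(2) GN in blast)+
    moreover have "\<Union>G \<subseteq> {0..1}" using GN by blast
    ultimately show ?thesis using G(3) by simp
  qed
  have FmU: "Fm \<subseteq> U" unfolding U_def Fpow_def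
  proof
    fix N assume "N \<in> Fm" then show "N \<in> Union ` {A. A \<subseteq> Fm \<and> finite A}"
      by (intro image_eqI[of _ _ "{N}"]) auto
  qed
  have Ucov: "null_cover U" using U_null FmU Fm(1) unfolding null_cover_def by blast
  have infU: "infinite U" using FmU infF finite_subset by blast
  have U_le: "U \<lesssim> Fm"
    unfolding U_def by (rule lepoll_trans2[OF image_lepoll eqpoll_Fpow[OF infF]])
  have "|UNIV::bool set| \<le>o |U|"
    using finite_lepoll_infinite[OF infU, of "UNIV::bool set"] unfolding lepoll_def
    by (simp add: card_of_ordLeq[symmetric])
  then have UB: "U \<times> (UNIV::bool set) \<approx> U"
    using card_of_Times_infinite[OF infU, of "UNIV::bool set"] eqpoll_iff_card_of_ordIso by auto
  have "Fm \<lesssim> (\<lambda>x. {x}) ` {0..(1::real)}" by (rule mp[OF spec[OF Fm(2)] singleton_cover])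
  also have "\<dots> \<lesssim> {0..(1::real)}" by (rule image_lepoll)
  also have "\<dots> \<lesssim> (UNIV::real set)" by (rule subset_imp_lepoll) auto
  finally have "Fm \<lesssim> (UNIV::real set)" .
  then have "U \<times> (UNIV::bool set) \<lesssim> (UNIV::real set)"
    by (rule lepoll_trans1[OF UB lepoll_trans[OF U_le]])
  then obtain \<iota> :: "real set \<times> bool \<Rightarrow> real" where inj: "inj_on \<iota> (U \<times> UNIV)"
    unfolding lepoll_def by blast
  define A where "A = \<iota> ` (U \<times> UNIV)"
  define \<Phi> where "\<Phi> a = fst (inv_into (U \<times> UNIV) \<iota> a)" for a
  have Phi_i: "\<And>u b. u \<in> U \<Longrightarrow> \<Phi> (\<iota> (u, b)) = u"
    unfolding \<Phi>_def using inj by simp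
  have PhiU: "\<And>a. a \<in> A \<Longrightarrow> \<Phi> a \<in> U" unfolding A_def using Phi_i by auto
  have 1: "\<forall>a\<in>A. \<Phi> a \<subseteq> {0..1} \<and> \<Phi> a \<in> null_sets lebesgue"
    using PhiU U_null by blast
  have 2: "\<forall>t\<in>{0..1}. \<exists>a\<in>A. t \<in> \<Phi> a"
  proof
    fix t :: real assume "t \<in> {0..1}"
    then obtain u where "u \<in> U" "t \<in> u" using Ucov unfolding null_cover_def by blast
    then show "\<exists>a\<in>A. t \<in> \<Phi> a" using Phi_i unfolding A_def by (intro bexI[of _ "\<iota> (u, True)"]) auto
  qed
  have Un: "\<And>u v. u \<in> U \<Longrightarrow> v \<in> U \<Longrightarrow> u \<union> v \<in> U"
    unfolding U_def Fpow_def
  proof -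
    fix u v assume "u \<in> Union ` {A. A \<subseteq> Fm \<and> finite A}" "v \<in> Union ` {A. A \<subseteq> Fm \<and> finite A}"
    then obtain G1 G2 where "G1 \<subseteq> Fm" "finite G1" "u = \<Union>G1" "G2 \<subseteq> Fm" "finite G2" "v = \<Union>G2" by (elim imageE CollectE conjE) blast
    then show "u \<union> v \<in> Union ` {A. A \<subseteq> Fm \<and> finite A}"
      by (intro image_eqI[of _ _ "G1 \<union> G2"]) auto
  qed
  have 3: "\<forall>a\<in>A. \<forall>b\<in>A. \<exists>c\<in>A. \<Phi> a \<union> \<Phi> b \<subseteq> \<Phi> c"
  proof (intro ballI)
    fix a b assume "a \<in> A" "b \<in> A"
    then have "\<Phi> a \<union> \<Phi> b \<in> U" using PhiU Un by blast
    then show "\<exists>c\<in>A. \<Phi> a \<union> \<Phi> b \<subseteq> \<Phi> c" using Phi_i unfolding A_def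
      by (intro bexI[of _ "\<iota> (\<Phi> a \<union> \<Phi> b, True)"]) auto
  qed
  have eU: "{} \<in> U" unfolding U_def Fpow_def by (intro image_eqI[of _ _ "{}"]) auto
  have 4: "\<exists>a1\<in>A. \<exists>a2\<in>A. a1 \<noteq> a2 \<and> \<Phi> a1 = \<Phi> a2"
  proof (intro bexI conjI)
    show "\<iota> ({}, True) \<noteq> \<iota> ({}, False)" using inj eU unfolding inj_on_def by blast
    show "\<Phi> (\<iota> ({}, True)) = \<Phi> (\<iota> ({}, False))" using Phi_i eU by simp
  qed (use eU in \<open>auto simp: A_def\<close>)
  have AU: "A \<approx> U" unfolding A_def by (rule eqpoll_trans[OF inj_on_image_eqpoll_self[OF inj] UB])
  have 5: "card_eq_covN A" unfolding card_eq_covN_def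
  proof
    show "\<exists>F. null_cover F \<and> A \<approx> F" using AU Ucov by blast
    show "\<forall>F. null_cover F \<longrightarrow> A \<lesssim> F"
      by (metis AU U_le Fm(2) lepoll_trans1 lepoll_trans)
  qed
  show ?thesis apply (rule exI[of _ A], rule exI[of _ \<Phi>]) using 1 2 3 4 5 by (intro conjI)
qed


lemma sum_powr_lim:
  fixes d \<rho> :: "nat \<Rightarrow> real"
  assumes inj: "inj_on \<rho> {..<n}" and pos: "\<forall>i<n. \<rho> i > 0" and ex: "\<exists>i<n. d i \<noteq> 0"
  shows "filterlim (\<lambda>u. \<Sum>i<n. d i * u powr \<rho> i) at_top at_top
       \<or> filterlim (\<lambda>u. \<Sum>i<n. d i * u powr \<rho> i) at_bot at_top"
proof -
  define I where "I = {i. i < n \<and> d i \<noteq> 0}"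
  have finI: "finite I" unfolding I_def by simp
  have neI: "I \<noteq> {}" using ex unfolding I_def by blast
  have "Max (\<rho> ` I) \<in> \<rho> ` I" using finI neI by (intro Max_in) auto
  then obtain j where jI: "j \<in> I" and jmax: "\<rho> j = Max (\<rho> ` I)"
    by (metis imageE)
  have jn: "j < n" and dj: "d j \<noteq> 0" using jI unfolding I_def by auto
  have less: "\<rho> i < \<rho> j" if "i \<in> I" "i \<noteq> j" for i
  proof -
    have "\<rho> i \<le> \<rho> j" using jmax finI that(1) by simp
    moreover have "\<rho> i \<noteq> \<rho> j" using inj that jI unfolding I_def inj_on_def by auto
    ultimately show ?thesis by simp
  qed
  have lim: "((\<lambda>u. \<Sum>i<n. d i * u powr (\<rho> i - \<rho> j)) \<longlongrightarrow> (\<Sum>i<n. if i = j then d j else 0)) at_top"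
  proof (rule tendsto_sum)
    fix i assume "i \<in> {..<n}"
    show "((\<lambda>u. d i * u powr (\<rho> i - \<rho> j)) \<longlongrightarrow> (if i = j then d j else 0)) at_top"
    proof (cases "i = j")
      case True
      have "eventually (\<lambda>u. d j = d i * u powr (\<rho> i - \<rho> j)) at_top"
        using eventually_gt_at_top[of 0] by eventually_elim (simp add: True)
      then show ?thesis using True by (simp add: tendsto_eventually)
    next
      case False
      show ?thesis
      proof (cases "d i = 0")
        case True then show ?thesis using False by simp
      next
        case dne: False
        then have "i \<in> I" using \<open>i \<in> {..<n}\<close> unfolding I_def by simp
        then have "\<rho> i - \<rho> j < 0" using less False by simp
        then have "((\<lambda>u. u powr (\<rho> i - \<rho> j)) \<longlongrightarrow> 0) at_top"
          by (rule tendsto_neg_powr) (rule filterlim_ident)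
        then show ?thesis using False tendsto_mult_right_zero by fastforce
      qed
    qed
  qed
  have sumj: "(\<Sum>i<n. if i = j then d j else 0) = d j" using jn by simp
  have eq: "eventually (\<lambda>u. (\<Sum>i<n. d i * u powr (\<rho> i - \<rho> j)) * u powr \<rho> j = (\<Sum>i<n. d i * u powr \<rho> i)) at_top"
    using eventually_gt_at_top[of 0]
  proof eventually_elim
    case (elim u)
    have "(\<Sum>i<n. d i * u powr (\<rho> i - \<rho> j)) * u powr \<rho> j = (\<Sum>i<n. d i * u powr (\<rho> i - \<rho> j) * u powr \<rho> j)"
      by (simp add: sum_distrib_right)
    also have "\<dots> = (\<Sum>i<n. d i * u powr \<rho> i)"
      using elim by (intro sum.cong refl) (simp add: powr_diff)
    finally show ?case .
  qed
  have top: "filterlim (\<lambda>u. u powr \<rho> j) at_top at_top"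
    using pos jn by (intro real_powr_at_top) simp
  show ?thesis
  proof (cases "d j > 0")
    case True
    have "filterlim (\<lambda>u. (\<Sum>i<n. d i * u powr (\<rho> i - \<rho> j)) * u powr \<rho> j) at_top at_top"
      by (rule filterlim_tendsto_pos_mult_at_top[OF lim]) (use True sumj top in simp_all)
    then show ?thesis using filterlim_cong[OF refl refl eq, THEN iffD1] by blast
  next
    case False
    then have "- d j > 0" using dj by simp
    moreover have "((\<lambda>u. - (\<Sum>i<n. d i * u powr (\<rho> i - \<rho> j))) \<longlongrightarrow> - d j) at_top"
      using tendsto_minus[OF lim] sumj by simp
    ultimately have L: "filterlim (\<lambda>u. - (\<Sum>i<n. d i * u powr (\<rho> i - \<rho> j)) * u powr \<rho> j) at_top at_top"
      by (intro filterlim_tendsto_pos_mult_at_top top)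
    have E: "eventually (\<lambda>u. - (\<Sum>i<n. d i * u powr (\<rho> i - \<rho> j)) * u powr \<rho> j = - (\<Sum>i<n. d i * u powr \<rho> i)) at_top"
      by (rule eventually_mono[OF eq]) (simp only: minus_mult_left)
    have "filterlim (\<lambda>u. - (\<Sum>i<n. d i * u powr \<rho> i)) at_top at_top"
      by (rule filterlim_cong[OF refl refl E, THEN iffD1, OF L])
    then show ?thesis by (simp add: filterlim_uminus_at_bot)
  qed
qed

lemma exp_neg_lim:
  fixes D :: "real \<Rightarrow> real"
  assumes "filterlim D at_top at_top"
  shows "((\<lambda>t. exp (- D (inverse t))) \<longlongrightarrow> (0::real)) (at_right 0)"
proof -
  have "filterlim (\<lambda>u. - D u) at_bot at_top" using assms by (simp add: filterlim_uminus_at_bot)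
  then have "((\<lambda>u. exp (- D u)) \<longlongrightarrow> (0::real)) at_top"
    by (rule filterlim_compose[OF exp_at_bot])
  then show ?thesis by (intro filterlim_at_right_to_top[THEN iffD2]) simp
qed

definition Mf :: "(nat \<Rightarrow> real) \<Rightarrow> nat \<Rightarrow> (nat \<Rightarrow> nat) \<Rightarrow> real \<Rightarrow> real" where
  "Mf \<rho> n e t = exp (- (\<Sum>i<n. real (e i) * inverse t powr \<rho> i))"

lemma dichotomy:
  assumes inj: "inj_on \<rho> {..<n}" and pos: "\<forall>i<n. \<rho> i > 0"
    and e: "\<forall>i\<ge>n. e i = 0" and e': "\<forall>i\<ge>n. e' i = 0" and ne: "e \<noteq> e'"
  shows "((\<lambda>t. Mf \<rho> n e t / Mf \<rho> n e' t) \<longlongrightarrow> 0) (at_right 0)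
       \<or> ((\<lambda>t. Mf \<rho> n e' t / Mf \<rho> n e t) \<longlongrightarrow> 0) (at_right 0)"
proof -
  define D where "D u = (\<Sum>i<n. (real (e i) - real (e' i)) * u powr \<rho> i)" for u
  have ex: "\<exists>i<n. real (e i) - real (e' i) \<noteq> 0"
  proof (rule ccontr)
    assume "\<not> ?thesis"
    then have "\<forall>i. e i = e' i" using e e' by (metis not_le of_nat_eq_iff eq_iff_diff_eq_0)
    then show False using ne by auto
  qed
  have r1: "Mf \<rho> n e t / Mf \<rho> n e' t = exp (- D (inverse t))" for t
  proof -
    have dd: "D (inverse t) = (\<Sum>i<n. real (e i) * inverse t powr \<rho> i) - (\<Sum>i<n. real (e' i) * inverse t powr \<rho> i)"
      unfolding D_def by (simp add: sum_subtractf[symmetric] left_diff_distrib)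
    show ?thesis unfolding Mf_def dd by (simp add: exp_diff[symmetric] algebra_simps)
  qed
  have r2: "Mf \<rho> n e' t / Mf \<rho> n e t = exp (- (\<lambda>u. - D u) (inverse t))" for t
  proof -
    have "Mf \<rho> n e' t / Mf \<rho> n e t = inverse (Mf \<rho> n e t / Mf \<rho> n e' t)" by simp
    also have "\<dots> = exp (- (\<lambda>u. - D u) (inverse t))" unfolding r1 by (simp add: exp_minus)
    finally show ?thesis .
  qed
  from sum_powr_lim[OF inj pos ex]
  have "filterlim D at_top at_top \<or> filterlim (\<lambda>u. - D u) at_top at_top"
    unfolding D_def by (simp add: filterlim_uminus_at_bot)
  then show ?thesis
  proof
    assume "filterlim D at_top at_top"
    then show ?thesis unfolding r1 using exp_neg_lim by blast
  next
    assume "filterlim (\<lambda>u. - D u) at_top at_top"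
    from exp_neg_lim[OF this] show ?thesis unfolding r2 by blast
  qed
qed

lemma dominant:
  fixes M :: "'e \<Rightarrow> 'b \<Rightarrow> real"
  assumes "finite E" "E \<noteq> {}" "E \<subseteq> S"
    and pos: "\<And>e t. M e t \<noteq> 0"
    and dich: "\<And>e e'. e \<in> S \<Longrightarrow> e' \<in> S \<Longrightarrow> e \<noteq> e' \<Longrightarrow>
       ((\<lambda>t. M e t / M e' t) \<longlongrightarrow> 0) F \<or> ((\<lambda>t. M e' t / M e t) \<longlongrightarrow> 0) F"
  shows "\<exists>e\<in>E. ((\<lambda>t. (\<Sum>e'\<in>E. c e' * M e' t) / M e t) \<longlongrightarrow> c e) F"
  using assms(1-3)
proof (induction E rule: finite_ne_induct)
  case (singleton x)
  then show ?case using pos by simp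
next
  case (insert x E)
  then obtain y where yE: "y \<in> E" and lim: "((\<lambda>t. (\<Sum>e'\<in>E. c e' * M e' t) / M y t) \<longlongrightarrow> c y) F"
    by auto
  have xy: "x \<noteq> y" using insert.hyps yE by auto
  have xS: "x \<in> S" and yS: "y \<in> S" using insert.prems yE by auto
  have sum_ins: "(\<Sum>e'\<in>insert x E. c e' * M e' t) = c x * M x t + (\<Sum>e'\<in>E. c e' * M e' t)" for t
    using insert.hyps by simp
  from dich[OF xS yS xy] show ?case
  proof
    assume a: "((\<lambda>t. M x t / M y t) \<longlongrightarrow> 0) F"
    have "((\<lambda>t. c x * (M x t / M y t) + (\<Sum>e'\<in>E. c e' * M e' t) / M y t) \<longlongrightarrow> c x * 0 + c y) F"
      by (intro tendsto_intros a lim)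
    moreover have "c x * (M x t / M y t) + (\<Sum>e'\<in>E. c e' * M e' t) / M y t
        = (\<Sum>e'\<in>insert x E. c e' * M e' t) / M y t" for t
      unfolding sum_ins by (simp add: add_divide_distrib)
    ultimately show ?thesis using yE by (intro bexI[of _ y]) auto
  next
    assume a: "((\<lambda>t. M y t / M x t) \<longlongrightarrow> 0) F"
    have "((\<lambda>t. c x + ((\<Sum>e'\<in>E. c e' * M e' t) / M y t) * (M y t / M x t)) \<longlongrightarrow> c x + c y * 0) F"
      by (intro tendsto_intros a lim)
    moreover have "c x + ((\<Sum>e'\<in>E. c e' * M e' t) / M y t) * (M y t / M x t)
        = (\<Sum>e'\<in>insert x E. c e' * M e' t) / M x t" for t
      unfolding sum_ins using pos[of x t] pos[of y t] by (simp add: field_simps)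
    ultimately show ?thesis by (intro bexI[of _ x]) auto
  qed
qed

lemma Pg_nonzero:
  assumes "finite E" "E \<noteq> {}" "\<forall>e\<in>E. c e \<noteq> 0" "\<forall>e\<in>E. \<forall>i\<ge>n. e i = 0"
    and inj: "inj_on \<rho> {..<n}" and pos: "\<forall>i<n. \<rho> i > 0"
  shows "\<exists>\<delta>>0. \<forall>t. 0 < t \<and> t < \<delta> \<longrightarrow> (\<Sum>e\<in>E. c e * Mf \<rho> n e t) \<noteq> 0"
proof -
  have "\<exists>e\<in>E. ((\<lambda>t. (\<Sum>e'\<in>E. c e' * Mf \<rho> n e' t) / Mf \<rho> n e t) \<longlongrightarrow> c e) (at_right 0)"
    by (rule dominant[OF assms(1,2) order_refl]) (use assms(4) dichotomy[OF inj pos] in \<open>auto simp: Mf_def\<close>)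
  then obtain e where eE: "e \<in> E" and lim: "((\<lambda>t. (\<Sum>e'\<in>E. c e' * Mf \<rho> n e' t) / Mf \<rho> n e t) \<longlongrightarrow> c e) (at_right 0)"
    by blast
  have "eventually (\<lambda>t. (\<Sum>e'\<in>E. c e' * Mf \<rho> n e' t) / Mf \<rho> n e t \<noteq> 0) (at_right 0)"
    using tendsto_imp_eventually_ne[OF lim] assms(3) eE by blast
  then have "eventually (\<lambda>t. (\<Sum>e'\<in>E. c e' * Mf \<rho> n e' t) \<noteq> 0) (at_right (0::real))"
    by eventually_elim auto
  then show ?thesis unfolding eventually_at_right_field by auto
qed


definition Gf :: "real \<Rightarrow> real \<Rightarrow> real" where
  "Gf s t = exp (- (inverse t powr exp s))"

lemma prod_G: "(\<Prod>i<n. Gf (\<sigma> i) t ^ e i) = Mf (\<lambda>i. exp (\<sigma> i)) n e t"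
proof -
  have "Mf (\<lambda>i. exp (\<sigma> i)) n e t = exp (\<Sum>i<n. real (e i) * (- (inverse t powr exp (\<sigma> i))))"
    unfolding Mf_def by (simp add: sum_negf[symmetric])
  also have "\<dots> = (\<Prod>i<n. exp (real (e i) * (- (inverse t powr exp (\<sigma> i)))))"
    by (rule exp_sum) simp
  also have "\<dots> = (\<Prod>i<n. Gf (\<sigma> i) t ^ e i)"
    unfolding Gf_def by (intro prod.cong refl) (simp add: exp_of_nat_mult[symmetric])
  finally show ?thesis ..
qed

lemma Mf_bounds: "0 < Mf \<rho> n e t" "Mf \<rho> n e t \<le> 1"
proof -
  show "0 < Mf \<rho> n e t" unfolding Mf_def by simp
  have "0 \<le> (\<Sum>i<n. real (e i) * inverse t powr \<rho> i)" by (intro sum_nonneg) simp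
  then show "Mf \<rho> n e t \<le> 1" unfolding Mf_def by simp
qed

lemma idm [measurable]: "(\<lambda>t::real. t) \<in> borel_measurable (lebesgue_on S)"
  using id_borel_measurable_lebesgue_on unfolding id_def .

lemma Mf_meas [measurable]: "Mf \<rho> n e \<in> borel_measurable (lebesgue_on S)"
  unfolding Mf_def by measurable

lemma poly_eval_form:
  fixes A :: "'a set" and \<Phi> :: "'a \<Rightarrow> real set"
  assumes xs: "\<forall>i<n. x i = (\<lambda>a t. if a \<in> A \<and> t \<in> \<Phi> a then Gf (\<sigma> i) t else 0)"
    and pnc: "poly_nc n c"
  shows "poly_eval n c x = (\<lambda>a t. if a \<in> A \<and> t \<in> \<Phi> a
            then (\<Sum>e\<in>{e. c e \<noteq> 0}. c e * Mf (\<lambda>i. exp (\<sigma> i)) n e t) else 0)"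
proof (intro ext)
  fix a t
  show "poly_eval n c x a t = (if a \<in> A \<and> t \<in> \<Phi> a
            then (\<Sum>e\<in>{e. c e \<noteq> 0}. c e * Mf (\<lambda>i. exp (\<sigma> i)) n e t) else 0)"
  proof (cases "a \<in> A \<and> t \<in> \<Phi> a")
    case True
    have "poly_eval n c x a t = (\<Sum>e\<in>{e. c e \<noteq> 0}. c e * (\<Prod>i<n. Gf (\<sigma> i) t ^ e i))"
      unfolding poly_eval_def using True xs by (intro sum.cong refl arg_cong2[where f="(*)"] prod.cong) auto
    then show ?thesis using True by (simp add: prod_G)
  next
    case False
    have pz: "(\<Prod>i<n. x i a t ^ e i) = 0" if "c e \<noteq> 0" for e
    proof -
      have "e \<noteq> (\<lambda>_. 0)" "\<forall>i\<ge>n. e i = 0" using pnc that unfolding poly_nc_def by auto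
      then obtain i where "e i \<noteq> 0" by auto
      then have "i < n" using \<open>\<forall>i\<ge>n. e i = 0\<close> by (meson not_le)
      moreover have "x i a t ^ e i = 0" using \<open>i < n\<close> xs False \<open>e i \<noteq> 0\<close> by auto
      ultimately show ?thesis by (intro prod_zero) auto
    qed
    have "poly_eval n c x a t = 0" unfolding poly_eval_def
      by (intro sum.neutral ballI) (simp add: pz)
    then show ?thesis using False by auto
  qed
qed

lemma main_alg:
  fixes A :: "'a set" and \<Phi> :: "'a \<Rightarrow> real set"
  assumes P1: "\<forall>a\<in>A. \<Phi> a \<subseteq> {0..1} \<and> \<Phi> a \<in> null_sets lebesgue"
    and P2: "\<forall>t\<in>{0..1}. \<exists>a\<in>A. t \<in> \<Phi> a"
  shows "strongly_algebrable (net_algebra A) (ND A (\<lambda>a b. \<Phi> a \<subseteq> \<Phi> b) \<inter> net_algebra A) (UNIV::real set)"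
proof -
  define xs where "xs s = (\<lambda>a t. if a \<in> A \<and> t \<in> \<Phi> a then Gf s t else 0)" for s
  define X where "X = range xs"
  have space: "space (lebesgue_on {0..1::real}) = {0..1}" by simp
  have Phi_sets: "\<Phi> a \<in> sets (lebesgue_on {0..1})" if "a \<in> A" for a
    using P1 that by (subst sets_restrict_space_iff) auto
  have Phi_null: "\<Phi> a \<in> null_sets (lebesgue_on {0..1})" if "a \<in> A" for a
    using P1 that by (subst null_sets_restrict_space) auto
  have XN: "X \<subseteq> net_algebra A"
    unfolding X_def xs_def net_algebra_def using P1 by fastforce
  have inj: "inj xs"
  proof (rule injI)
    fix s1 s2 assume eq: "xs s1 = xs s2"
    obtain a where a: "a \<in> A" "1/2 \<in> \<Phi> a" using P2 by force
    have "xs s1 a (1/2) = xs s2 a (1/2)" using eq by simp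
    then have "Gf s1 (1/2) = Gf s2 (1/2)" using a unfolding xs_def by simp
    then have "(2::real) powr exp s1 = 2 powr exp s2" unfolding Gf_def by simp
    then have "exp s1 = exp s2" by (simp add: powr_inj)
    then show "s1 = s2" by simp
  qed
  have XU: "X \<approx> (UNIV::real set)" unfolding X_def by (rule inj_on_image_eqpoll_self[OF inj])
  have main: "poly_eval n c x \<in> ND A (\<lambda>a b. \<Phi> a \<subseteq> \<Phi> b) \<inter> net_algebra A \<and> poly_eval n c x \<noteq> (\<lambda>_ _. 0)"
    if hx: "x ` {..<n} \<subseteq> X" and injx: "inj_on x {..<n}" and pnc: "poly_nc n c" and cne: "c \<noteq> (\<lambda>_. 0)"
    for n x c
  proof -
    define \<sigma> where "\<sigma> i = (SOME s. x i = xs s)" for i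
    have xsig: "x i = xs (\<sigma> i)" if "i < n" for i
    proof -
      have "\<exists>s. x i = xs s" using hx that unfolding X_def by auto
      then show ?thesis unfolding \<sigma>_def by (rule someI_ex)
    qed
    have injs: "inj_on \<sigma> {..<n}"
    proof (rule inj_onI)
      fix i j assume "i \<in> {..<n}" "j \<in> {..<n}" "\<sigma> i = \<sigma> j"
      then have "x i = x j" using xsig by simp
      then show "i = j" using injx \<open>i \<in> {..<n}\<close> \<open>j \<in> {..<n}\<close> unfolding inj_on_def by blast
    qed
    define \<rho> where "\<rho> i = exp (\<sigma> i)" for i
    have injr: "inj_on \<rho> {..<n}" using injs unfolding \<rho>_def inj_on_def by simp
    have posr: "\<forall>i<n. \<rho> i > 0" unfolding \<rho>_def by simp
    define E where "E = {e. c e \<noteq> 0}"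
    have finE: "finite E" using pnc unfolding poly_nc_def E_def by simp
    have neE: "E \<noteq> {}" using cne unfolding E_def by auto
    have cE: "\<forall>e\<in>E. c e \<noteq> 0" unfolding E_def by simp
    have suppE: "\<forall>e\<in>E. \<forall>i\<ge>n. e i = 0" using pnc unfolding poly_nc_def E_def by simp
    define Pg where "Pg t = (\<Sum>e\<in>E. c e * Mf \<rho> n e t)" for t
    have xs_form: "\<forall>i<n. x i = (\<lambda>a t. if a \<in> A \<and> t \<in> \<Phi> a then Gf (\<sigma> i) t else 0)"
      using xsig unfolding xs_def by simp
    have PE: "poly_eval n c x = (\<lambda>a t. if a \<in> A \<and> t \<in> \<Phi> a then Pg t else 0)"
      unfolding Pg_def E_def \<rho>_def by (rule poly_eval_form[OF xs_form pnc])
    define B where "B = (\<Sum>e\<in>E. \<bar>c e\<bar>)"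
    have Pg_bound: "\<bar>Pg t\<bar> \<le> B" for t
    proof -
      have "\<bar>Pg t\<bar> \<le> (\<Sum>e\<in>E. \<bar>c e * Mf \<rho> n e t\<bar>)" unfolding Pg_def by (rule sum_abs)
      also have "\<dots> \<le> B" unfolding B_def
      proof (rule sum_mono)
        fix e
        have "\<bar>c e * Mf \<rho> n e t\<bar> = \<bar>c e\<bar> * Mf \<rho> n e t" using Mf_bounds(1)[of \<rho> n e t] by (simp add: abs_mult)
        also have "\<dots> \<le> \<bar>c e\<bar> * 1" using Mf_bounds(2)[of \<rho> n e t] by (intro mult_left_mono) auto
        finally show "\<bar>c e * Mf \<rho> n e t\<bar> \<le> \<bar>c e\<bar>" by simp
      qed
      finally show ?thesis .
    qed
    have B0: "0 \<le> B" unfolding B_def by (simp add: sum_nonneg)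
    have Pg_meas [measurable]: "Pg \<in> borel_measurable (lebesgue_on {0..1})"
      unfolding Pg_def by measurable
    have fin: "finite_measure (lebesgue_on {0..1::real})" by (rule finite_measure_lebesgue_on) simp
    have Pg_int: "integrable (lebesgue_on {0..1}) Pg"
      by (rule finite_measure.integrable_const_bound[OF fin, of _ B]) (use Pg_bound in auto)
    obtain \<delta> where dpos: "\<delta> > 0" and dnz: "\<And>t. 0 < t \<Longrightarrow> t < \<delta> \<Longrightarrow> Pg t \<noteq> 0"
      using Pg_nonzero[OF finE neE cE suppE injr posr] unfolding Pg_def by blast
    define \<delta>' where "\<delta>' = min \<delta> 1"
    have d'pos: "\<delta>' > 0" and d'le: "\<delta>' \<le> 1" and d'd: "\<delta>' \<le> \<delta>" using dpos unfolding \<delta>'_def by auto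
    define f where "f = poly_eval n c x"
    have f_eq: "f a = (\<lambda>t. if t \<in> \<Phi> a then Pg t else 0)" if "a \<in> A" for a
      unfolding f_def PE using that by auto
    have f_meas: "f a \<in> borel_measurable (lebesgue_on {0..1})" if "a \<in> A" for a
      unfolding f_eq[OF that]
      by (rule measurable_If_set) (use Phi_sets[OF that] P1 that in auto)
    define K where "K = integral\<^sup>L (lebesgue_on {0..1}) (\<lambda>t. \<bar>Pg t\<bar>)"
    have Kpos: "K > 0"
    proof -
      have "K \<ge> 0" unfolding K_def by simp
      moreover have "K \<noteq> 0"
      proof
        assume "K = 0"
        then have "AE t in lebesgue_on {0..1}. \<bar>Pg t\<bar> = 0"
          unfolding K_def by (subst (asm) integral_nonneg_eq_0_iff_AE) (use Pg_int in auto)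
        moreover have Nset: "{t \<in> space (lebesgue_on {0..1}). \<not> \<bar>Pg t\<bar> = 0} \<in> sets (lebesgue_on {0..1::real})"
          by measurable
        ultimately have N0: "emeasure (lebesgue_on {0..1}) {t \<in> space (lebesgue_on {0..1}). \<not> \<bar>Pg t\<bar> = 0} = 0"
          using AE_iff_measurable[OF Nset refl] by simp
        have sub: "{0<..<\<delta>'} \<subseteq> {t \<in> space (lebesgue_on {0..1}). \<not> \<bar>Pg t\<bar> = 0}"
          using dnz d'le d'd by auto
        have "emeasure (lebesgue_on {0..1}) {0<..<\<delta>'} \<le> 0"
          using emeasure_mono[OF sub Nset] N0 by simp
        moreover have "emeasure (lebesgue_on {0..1}) {0<..<\<delta>'} = ennreal \<delta>'"
        proof -
          have "emeasure (lebesgue_on {0..1}) {0<..<\<delta>'} = emeasure lebesgue {0<..<\<delta>'}"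
            using d'le by (intro emeasure_restrict_space) auto
          also have "\<dots> = emeasure lborel {0<..<\<delta>'}" by (subst emeasure_completion) simp_all
          also have "\<dots> = ennreal \<delta>'" using d'pos by simp
          finally show ?thesis .
        qed
        ultimately show False using d'pos by simp
      qed
      ultimately show ?thesis by simp
    qed
    have I_eq: "integral\<^sup>L (lebesgue_on {0..1}) (\<lambda>t. \<bar>f a t - Pg t\<bar>) = K" if "a \<in> A" for a
      unfolding K_def
    proof (rule integral_cong_AE)
      show "(\<lambda>t. \<bar>f a t - Pg t\<bar>) \<in> borel_measurable (lebesgue_on {0..1})"
        using f_meas[OF that] by measurable
      show "(\<lambda>t. \<bar>Pg t\<bar>) \<in> borel_measurable (lebesgue_on {0..1})" by measurable
      show "AE t in lebesgue_on {0..1}. \<bar>f a t - Pg t\<bar> = \<bar>Pg t\<bar>"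
        using AE_not_in[OF Phi_null[OF that]] by (rule eventually_mono) (simp add: f_eq[OF that])
    qed
    have inND: "f \<in> ND A (\<lambda>a b. \<Phi> a \<subseteq> \<Phi> b)"
      unfolding ND_def
    proof (intro CollectI conjI ballI exI)
      show "\<And>a. a \<in> A \<Longrightarrow> f a \<in> borel_measurable (lebesgue_on {0..1})" by (rule f_meas)
      show "integrable (lebesgue_on {0..1}) (\<lambda>t::real. B)" by (rule finite_measure.integrable_const[OF fin])
      show "AE t in lebesgue_on {0..1}. \<bar>f a t\<bar> \<le> B" if "a \<in> A" for a
        by (rule AE_I2) (use Pg_bound B0 in \<open>simp add: f_eq[OF that]\<close>)
      show "integrable (lebesgue_on {0..1}) Pg" by (rule Pg_int)
      show "AE t in lebesgue_on {0..1}. net_tendsto A (\<lambda>a b. \<Phi> a \<subseteq> \<Phi> b) (\<lambda>a. f a t) (Pg t)"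
      proof (rule AE_I2)
        fix t assume "t \<in> space (lebesgue_on {0..1::real})"
        then obtain a0 where a0: "a0 \<in> A" "t \<in> \<Phi> a0" using P2 by force
        show "net_tendsto A (\<lambda>a b. \<Phi> a \<subseteq> \<Phi> b) (\<lambda>a. f a t) (Pg t)"
          unfolding net_tendsto_def
        proof (intro allI impI)
          fix e :: real assume "e > 0"
          show "\<exists>a0\<in>A. \<forall>a\<in>A. \<Phi> a0 \<subseteq> \<Phi> a \<longrightarrow> \<bar>f a t - Pg t\<bar> < e"
            using a0 \<open>e > 0\<close> f_eq by (intro bexI[of _ a0]) auto
        qed
      qed
      show "\<not> net_tendsto A (\<lambda>a b. \<Phi> a \<subseteq> \<Phi> b)
               (\<lambda>a. integral\<^sup>L (lebesgue_on {0..1}) (\<lambda>t. \<bar>f a t - Pg t\<bar>)) 0"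
      proof
        assume "net_tendsto A (\<lambda>a b. \<Phi> a \<subseteq> \<Phi> b) (\<lambda>a. integral\<^sup>L (lebesgue_on {0..1}) (\<lambda>t. \<bar>f a t - Pg t\<bar>)) 0"
        then obtain a0 where "a0 \<in> A" "\<forall>a\<in>A. \<Phi> a0 \<subseteq> \<Phi> a \<longrightarrow> \<bar>integral\<^sup>L (lebesgue_on {0..1}) (\<lambda>t. \<bar>f a t - Pg t\<bar>) - 0\<bar> < K"
          unfolding net_tendsto_def using Kpos by blast
        then have "\<bar>K - 0\<bar> < K" using I_eq by auto
        then show False by simp
      qed
    qed
    have inNA: "f \<in> net_algebra A"
      unfolding net_algebra_def f_def PE using P1 by fastforce
    have "f \<noteq> (\<lambda>_ _. 0)"
    proof
      assume f0: "f = (\<lambda>_ _. 0)"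
      define t0 where "t0 = \<delta>' / 2"
      have t0: "0 < t0" "t0 < \<delta>" "t0 \<in> {0..1}" using d'pos d'le d'd unfolding t0_def by auto
      then obtain a0 where a0: "a0 \<in> A" "t0 \<in> \<Phi> a0" using P2 by blast
      have "f a0 t0 = Pg t0" using f_eq[OF a0(1)] a0(2) by simp
      then show False using f0 dnz[OF t0(1,2)] by simp
    qed
    then show ?thesis using inND inNA unfolding f_def by blast
  qed
  show ?thesis unfolding strongly_algebrable_def
    using XN XU main by blast
qed

theorem mainTheorem4:
  shows "\<exists>(A :: real set) (le :: real \<Rightarrow> real \<Rightarrow> bool).
     directed_set A le
     \<and> \<not> card_order_on A (dir_rel A le)
     \<and> card_eq_covN A
     \<and> strongly_algebrable (net_algebra A) (ND A le \<inter> net_algebra A) (UNIV :: real set)"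
proof -
  obtain A :: "real set" and \<Phi> :: "real \<Rightarrow> real set" where
    P1: "\<forall>a\<in>A. \<Phi> a \<subseteq> {0..1} \<and> \<Phi> a \<in> null_sets lebesgue" and
    P2: "\<forall>t\<in>{0..1}. \<exists>a\<in>A. t \<in> \<Phi> a" and
    P3: "\<forall>a\<in>A. \<forall>b\<in>A. \<exists>c\<in>A. \<Phi> a \<union> \<Phi> b \<subseteq> \<Phi> c" and
    P4: "\<exists>a1\<in>A. \<exists>a2\<in>A. a1 \<noteq> a2 \<and> \<Phi> a1 = \<Phi> a2" and
    P5: "card_eq_covN A"
    using construct_A by blast
  define le where "le a b = (\<Phi> a \<subseteq> \<Phi> b)" for a b
  have D: "directed_set A le"
    unfolding directed_set_def le_def
  proof (intro conjI ballI impI)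
    show "A \<noteq> {}" using P2 by force
    show "\<And>a b. a \<in> A \<Longrightarrow> b \<in> A \<Longrightarrow> \<exists>c\<in>A. \<Phi> a \<subseteq> \<Phi> c \<and> \<Phi> b \<subseteq> \<Phi> c"
      using P3 by blast
  qed auto
  have NC: "\<not> card_order_on A (dir_rel A le)"
  proof
    assume "card_order_on A (dir_rel A le)"
    then have "antisym (dir_rel A le)"
      unfolding card_order_on_def well_order_on_def linear_order_on_def partial_order_on_def by blast
    moreover obtain a1 a2 where "a1 \<in> A" "a2 \<in> A" "a1 \<noteq> a2" "\<Phi> a1 = \<Phi> a2" using P4 by blast
    ultimately show False unfolding antisym_def dir_rel_def le_def by auto
  qed
  have S: "strongly_algebrable (net_algebra A) (ND A le \<inter> net_algebra A) (UNIV :: real set)"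
    unfolding le_def[abs_def] by (rule main_alg[OF P1 P2])
  show ?thesis using D NC P5 S by blast
qed

end
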